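(* Let $(T,\sigma)$ be a confluent temperature-1 tile assembly system. If the binding graph of an assembly path $\alpha$ is an ultimately periodic path $(0,0).mp^{\omega}$ (with $m,p$ finite free words, $p\neq\epsilon$), then $\alpha$ is an ultimately periodic assembly path, i.e. there are finite words $m',p'$ with $p'\ne\epsilon$ such that the binding graph of $\alpha$ is $(0,0).m'p'^{\omega}$ and $\alpha(\vec{m'}+i\vec{p'}+\vec q)=\alpha(\vec{m'}+\vec q)$ for all $i\ge 0$ and all prefixes $q$ of $p'$.
   Context: Directions $D=\{E=(1,0),N=(0,1),S=(0,-1),W=(-1,0)\}$; $\mathbb Z^2$ is the grid graph. A free path is a word over $D$ whose associated walk is simple. For a point $A$ and a free path $m$, $A.m$ is the path starting at $A$ and following the letters of $m$; for finite $m$, $\vec m$ is the sum of its letters. For finite $p\neq\epsilon$, $p^\omega=ppp\cdots$. A path $A.mp^\omega$ ($m,p$ finite, $p\ne\epsilon$) is ultimately periodic. Tile assembly: $\Sigma$ is a finite glue alphabet; a tile type is a map $t:D\to\Sigma$, written $d\mapsto t_d$. A temperature-1 tile assembly system (TAS) is a pair $(T,\sigma)$ with $T$ a finite set of tile types and $\sigma$ a tile type (the seed). An assembly is a partial map $\alpha:\mathbb Z^2\to T\cup\{\sigma\}$ (if $\sigma\notin T$, $\sigma$ is used at most once). Its binding graph has vertex set $\mathrm{Dom}(\alpha)$ and an edge between $v$ and $v+d$ ($d\in D$) iff $\alpha(v)_d=\alpha(v+d)_{-d}$. $\alpha$ is stable if its binding graph is connected, and producible if it is stable and $\alpha((0,0))=\sigma$.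 The TAS is confluent if any two producible assemblies agree on the intersection of their domains. An assembly path is a producible assembly whose binding graph is a path starting at $(0,0)$. *)

theory Defs
  imports Main "HOL-Library.Sublist"
begin

datatype dir = E | N | S | W

type_synonym point = "int \<times> int"

fun dvec :: "dir \<Rightarrow> point" where
  "dvec E = (1, 0)" | "dvec N = (0, 1)" | "dvec S = (0, -1)" | "dvec W = (-1, 0)"

fun opp :: "dir \<Rightarrow> dir" where
  "opp E = W" | "opp W = E" | "opp N = S" | "opp S = N"

definition padd :: "point \<Rightarrow> point \<Rightarrow> point" where
  "padd u v = (fst u + fst v, snd u + snd v)"

definition pscale :: "int \<Rightarrow> point \<Rightarrow> point" where
  "pscale k u = (k * fst u, k * snd u)"

fun wvec :: "dir list \<Rightarrow> point" where
  "wvec [] = (0, 0)" | "wvec (d # m) = padd (dvec d) (wvec m)"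

text \<open>Infinite words are maps \<open>nat \<Rightarrow> dir\<close>; \<open>m p\<^sup>\<omega>\<close> for finite \<open>m, p\<close> (\<open>p \<noteq> []\<close>).\<close>
definition ultper :: "dir list \<Rightarrow> dir list \<Rightarrow> (nat \<Rightarrow> dir)" where
  "ultper m p = (\<lambda>n. if n < length m then m ! n else p ! ((n - length m) mod length p))"

fun walkpos :: "(nat \<Rightarrow> dir) \<Rightarrow> nat \<Rightarrow> point" where
  "walkpos w 0 = (0, 0)" | "walkpos w (Suc n) = padd (walkpos w n) (dvec (w n))"

type_synonym 'g tile = "dir \<Rightarrow> 'g"
type_synonym 'g assembly = "point \<Rightarrow> 'g tile option"

definition is_assembly :: "'g tile set \<Rightarrow> 'g tile \<Rightarrow> 'g assembly \<Rightarrow> bool" where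
  "is_assembly T \<sigma> \<alpha> \<longleftrightarrow> ran \<alpha> \<subseteq> insert \<sigma> T \<and>
     (\<sigma> \<notin> T \<longrightarrow> (\<forall>u v. \<alpha> u = Some \<sigma> \<and> \<alpha> v = Some \<sigma> \<longrightarrow> u = v))"

text \<open>Edge of the binding graph between \<open>u\<close> and \<open>u + d\<close>.\<close>
definition bond :: "'g assembly \<Rightarrow> point \<Rightarrow> dir \<Rightarrow> bool" where
  "bond \<alpha> u d \<longleftrightarrow> (\<exists>t t'. \<alpha> u = Some t \<and> \<alpha> (padd u (dvec d)) = Some t' \<and> t d = t' (opp d))"

definition bgraph_adj :: "'g assembly \<Rightarrow> point \<Rightarrow> point \<Rightarrow> bool" where
  "bgraph_adj \<alpha> u v \<longleftrightarrow> (\<exists>d. v = padd u (dvec d) \<and> bond \<alpha> u d)"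

definition stable :: "'g assembly \<Rightarrow> bool" where
  "stable \<alpha> \<longleftrightarrow> (\<forall>u\<in>dom \<alpha>. \<forall>v\<in>dom \<alpha>. (u, v) \<in> {(x, y). bgraph_adj \<alpha> x y}\<^sup>*)"

definition producible :: "'g tile set \<Rightarrow> 'g tile \<Rightarrow> 'g assembly \<Rightarrow> bool" where
  "producible T \<sigma> \<alpha> \<longleftrightarrow> is_assembly T \<sigma> \<alpha> \<and> stable \<alpha> \<and> \<alpha> (0, 0) = Some \<sigma>"

definition confluent :: "'g tile set \<Rightarrow> 'g tile \<Rightarrow> bool" where
  "confluent T \<sigma> \<longleftrightarrow> (\<forall>\<alpha> \<beta>. producible T \<sigma> \<alpha> \<and> producible T \<sigma> \<beta> \<longrightarrow>
      (\<forall>u \<in> dom \<alpha> \<inter> dom \<beta>. \<alpha> u = \<beta> u))"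

definition bgraph_is_path :: "'g assembly \<Rightarrow> (nat \<Rightarrow> dir) \<Rightarrow> bool" where
  "bgraph_is_path \<alpha> w \<longleftrightarrow> inj (walkpos w) \<and> dom \<alpha> = range (walkpos w) \<and>
     (\<forall>u d. bond \<alpha> u d \<longleftrightarrow>
        (\<exists>n. {walkpos w n, walkpos w (Suc n)} = {u, padd u (dvec d)}))"

end

theory Submission
  imports Defs "HOL-Library.Product_Plus"
begin

lemma padd_eq: "padd u v = u + v" by (simp add: padd_def prod_eq_iff)

lemma pscale_0: "pscale 0 u = 0" by (simp add: pscale_def prod_eq_iff)

lemma pscale_Suc: "pscale (int (Suc i)) u = u + pscale (int i) u"
  by (simp add: pscale_def prod_eq_iff algebra_simps)

lemma pscale_Suc': "pscale (1 + int i) u = u + pscale (int i) u"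
  by (simp add: pscale_def prod_eq_iff algebra_simps)

lemma wvec_Nil0: "wvec [] = 0" by (simp add: zero_prod_def)

lemma wvec_append: "wvec (xs @ ys) = wvec xs + wvec ys"
  by (induction xs) (auto simp: padd_eq add.assoc prod_eq_iff)

lemma walkpos_shift:
  "walkpos w (a + k) = walkpos w a + wvec (map (\<lambda>t. w (a+t)) [0..<k])"
  by (induction k) (auto simp: padd_eq wvec_append prod_eq_iff)

lemma opp_opp: "opp (opp d) = d" by (cases d) auto

lemma padd_opp: "padd (padd u (dvec d)) (dvec (opp d)) = u"
  by (cases d) (auto simp: padd_def)

theorem mainTheorem2:
  fixes T :: "'g tile set" and \<sigma> :: "'g tile" and \<alpha> :: "'g assembly"
    and m p :: "dir list"
  assumes "finite T"
    and "confluent T \<sigma>"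
    and "producible T \<sigma> \<alpha>"
    and "p \<noteq> []"
    and "bgraph_is_path \<alpha> (ultper m p)"
  shows "\<exists>m' p'. p' \<noteq> [] \<and> bgraph_is_path \<alpha> (ultper m' p') \<and>
     (\<forall>i::nat. \<forall>q. prefix q p' \<longrightarrow>
        \<alpha> (padd (padd (wvec m') (pscale (int i) (wvec p'))) (wvec q)) = \<alpha> (padd (wvec m') (wvec q)))"
proof -
  define w where "w = ultper m p"
  have path: "bgraph_is_path \<alpha> w" using assms(5) w_def by simp
  have inj: "inj (walkpos w)" and dom\<alpha>: "dom \<alpha> = range (walkpos w)"
    and bond\<alpha>: "\<And>u d. bond \<alpha> u d \<longleftrightarrow> (\<exists>n. {walkpos w n, walkpos w (Suc n)} = {u, padd u (dvec d)})"
    using path unfolding bgraph_is_path_def by blast+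
  have wp_step: "padd (walkpos w n) (dvec (w n)) = walkpos w (Suc n)" for n by simp
  have bond\<alpha>_n: "bond \<alpha> (walkpos w n) (w n)" for n
    using bond\<alpha>[of "walkpos w n" "w n"] by (auto simp del: walkpos.simps simp: wp_step)
  have some\<alpha>: "\<alpha> (walkpos w n) \<noteq> None" for n using dom\<alpha> by auto
  have asm\<alpha>: "is_assembly T \<sigma> \<alpha>" and stab\<alpha>: "stable \<alpha>" and seed\<alpha>: "\<alpha> (0,0) = Some \<sigma>"
    using assms(3) unfolding producible_def by auto
  have ran\<alpha>: "ran \<alpha> \<subseteq> insert \<sigma> T" using asm\<alpha> unfolding is_assembly_def by auto
  have uniq\<alpha>: "\<sigma> \<notin> T \<Longrightarrow> \<alpha> u = Some \<sigma> \<Longrightarrow> \<alpha> v = Some \<sigma> \<Longrightarrow> u = v" for u v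
    using asm\<alpha> unfolding is_assembly_def by blast
  have per1: "w (x + length p) = w x" if "x \<ge> length m" for x
  proof -
    have "x + length p - length m = (x - length m) + length p" using that by simp
    then have "(x + length p - length m) mod length p = (x - length m) mod length p"
      by (metis mod_add_self2)
    then show ?thesis using that assms(4) unfolding w_def ultper_def by simp
  qed
  have perk: "w (x + k * length p) = w x" if "x \<ge> length m" for x k
  proof (induction k)
    case (Suc k)
    have "x + Suc k * length p = (x + k*length p) + length p" by simp
    then show ?case using per1[of "x + k*length p"] that Suc by (metis trans_le_add1)
  qed simp
  define f where "f k = \<alpha> (walkpos w (length m + Suc k * length p))" for k
  have "range f \<subseteq> insert None (Some ` insert \<sigma> T)"
  proof
    fix y assume "y \<in> range f"
    then obtain k where "y = f k" by auto
    then show "y \<in> insert None (Some ` insert \<sigma> T)"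
      using ran\<alpha> by (cases y) (auto simp: f_def intro: ranI)
  qed
  then have finr: "finite (range f)" using assms(1) by (meson finite.insertI finite_imageI finite_subset)
  have "\<not> inj f"
  proof
    assume "inj f"
    then have "finite (UNIV :: nat set)" using finr finite_imageD by blast
    then show False by simp
  qed
  then obtain x y where xy: "f x = f y" "x \<noteq> y" unfolding inj_def by blast
  obtain k1 k2 where k12: "k1 < k2" "f k1 = f k2"
  proof (cases "x < y")
    case True then show ?thesis using xy that by blast
  next
    case False then have "y < x" using xy by simp
    then show ?thesis using xy that by metis
  qed
  define i0 where "i0 = Suc k1"
  define j0 where "j0 = Suc k2"
  define ni where "ni = length m + i0 * length p"
  define nj where "nj = length m + j0 * length p"
  define L where "L = (j0 - i0) * length p"
  have ij: "i0 < j0" "i0 \<ge> 1" using k12 i0_def j0_def by auto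
  have Lpos: "L > 0" using ij assms(4) L_def by simp
  have njL: "nj = ni + L"
  proof -
    have "j0 = i0 + (j0 - i0)" using ij by simp
    then have "j0 * length p = i0 * length p + (j0 - i0) * length p" by (metis add_mult_distrib)
    then show ?thesis unfolding nj_def ni_def L_def by simp
  qed
  have ni_ge: "ni \<ge> length m" "ni \<ge> length p" "ni > 0"
    using ij assms(4) unfolding ni_def by (auto simp: trans_le_add2)
  have tile_eq: "\<alpha> (walkpos w nj) = \<alpha> (walkpos w ni)"
    using k12 unfolding f_def nj_def ni_def i0_def j0_def by simp
  have wL: "w (x + k*L) = w x" if "x \<ge> ni" for x k
  proof -
    have "k*L = (k*(j0-i0)) * length p" unfolding L_def by simp
    then show ?thesis using perk[of x "k*(j0-i0)"] that ni_ge by (metis le_trans)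
  qed
  define g where "g n = (if n \<le> nj then \<alpha> (walkpos w n) else \<alpha> (walkpos w (n - L)))" for n
  have g_hi: "g n = \<alpha> (walkpos w (n - L))" if "n \<ge> nj" for n
  proof (cases "n = nj")
    case True then show ?thesis using tile_eq njL g_def by simp
  next
    case False then show ?thesis using that g_def by simp
  qed
  have g_lo: "g n = \<alpha> (walkpos w n)" if "n \<le> nj" for n using that g_def by simp
  define \<gamma> where "\<gamma> u = (if u \<in> range (walkpos w) then g (inv (walkpos w) u) else None)" for u
  have \<gamma>w: "\<gamma> (walkpos w n) = g n" for n using inj by (simp add: \<gamma>_def)
  have gsome: "g n \<noteq> None" for n using some\<alpha> g_def by simp
  have dom\<gamma>: "dom \<gamma> = range (walkpos w)"
  proof
    show "dom \<gamma> \<subseteq> range (walkpos w)" unfolding \<gamma>_def dom_def by (auto split: if_splits)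
    show "range (walkpos w) \<subseteq> dom \<gamma>" using \<gamma>w gsome by auto
  qed
  have bond\<gamma>: "bond \<gamma> (walkpos w n) (w n)" for n
  proof (cases "n < nj")
    case True
    then have "\<gamma> (walkpos w n) = \<alpha> (walkpos w n)" "\<gamma> (walkpos w (Suc n)) = \<alpha> (walkpos w (Suc n))"
      using \<gamma>w[of n] \<gamma>w[of "Suc n"] g_lo[of n] g_lo[of "Suc n"] by (simp_all del: walkpos.simps)
    then show ?thesis using bond\<alpha>_n[of n] unfolding bond_def
      by (simp del: walkpos.simps add: wp_step)
  next
    case False
    then have h: "\<gamma> (walkpos w n) = \<alpha> (walkpos w (n - L))"
      "\<gamma> (walkpos w (Suc n)) = \<alpha> (walkpos w (Suc (n - L)))"
      using \<gamma>w[of n] \<gamma>w[of "Suc n"] g_hi[of n] g_hi[of "Suc n"] njL by (auto simp del: walkpos.simps simp: Suc_diff_le)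
    have "w (n - L + 1*L) = w (n - L)" using wL[of "n - L" 1] False njL by simp
    then have wn: "w n = w (n - L)" using False njL by simp
    show ?thesis unfolding bond_def wp_step h using bond\<alpha>_n[of "n - L"] wn
      unfolding bond_def wp_step by simp
  qed
  have bond\<gamma>': "bond \<gamma> (walkpos w (Suc n)) (opp (w n))" for n
  proof -
    have e: "padd (walkpos w (Suc n)) (dvec (opp (w n))) = walkpos w n"
      using padd_opp[of "walkpos w n" "w n"] by (simp del: walkpos.simps add: wp_step)
    show ?thesis using bond\<gamma>[of n] unfolding bond_def
      by (simp del: walkpos.simps add: wp_step e opp_opp) metis
  qed
  define R where "R = {(x, y). bgraph_adj \<gamma> x y}"
  have adj: "(walkpos w n, walkpos w (Suc n)) \<in> R" "(walkpos w (Suc n), walkpos w n) \<in> R" for n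
  proof -
    show "(walkpos w n, walkpos w (Suc n)) \<in> R"
      unfolding R_def bgraph_adj_def using bond\<gamma>[of n] wp_step[of n] by auto
    have e: "padd (walkpos w (Suc n)) (dvec (opp (w n))) = walkpos w n"
      using padd_opp[of "walkpos w n" "w n"] by (simp del: walkpos.simps add: wp_step)
    show "(walkpos w (Suc n), walkpos w n) \<in> R"
      unfolding R_def bgraph_adj_def using bond\<gamma>'[of n] e by force
  qed
  have conn: "(walkpos w 0, walkpos w n) \<in> R\<^sup>* \<and> (walkpos w n, walkpos w 0) \<in> R\<^sup>*" for n
  proof (induction n)
    case (Suc n)
    then show ?case using adj[of n]
      by (meson converse_rtrancl_into_rtrancl rtrancl_into_rtrancl)
  qed simp
  have stab\<gamma>: "stable \<gamma>"
    unfolding stable_def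
  proof (intro ballI)
    fix u v assume "u \<in> dom \<gamma>" "v \<in> dom \<gamma>"
    then obtain a b where "u = walkpos w a" "v = walkpos w b" using dom\<gamma> by auto
    then show "(u, v) \<in> {(x, y). bgraph_adj \<gamma> x y}\<^sup>*"
      using conn[of a] conn[of b] R_def by (meson rtrancl_trans)
  qed
  have gal: "\<exists>n'. g n = \<alpha> (walkpos w n') \<and> (n' = n \<or> n' > ni)" for n
  proof (cases "n \<le> nj")
    case True then show ?thesis using g_lo by blast
  next
    case False then show ?thesis using g_hi[of n] njL by (intro exI[of _ "n - L"]) auto
  qed
  have asm\<gamma>: "is_assembly T \<sigma> \<gamma>"
    unfolding is_assembly_def
  proof
    show "ran \<gamma> \<subseteq> insert \<sigma> T"
    proof
      fix t assume "t \<in> ran \<gamma>"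
      then obtain u where "\<gamma> u = Some t" unfolding ran_def by auto
      then obtain n where "g n = Some t" using dom\<gamma> \<gamma>w by (metis domI imageE)
      then obtain n' where "\<alpha> (walkpos w n') = Some t" using gal by metis
      then show "t \<in> insert \<sigma> T" using ran\<alpha> by (auto intro: ranI)
    qed
    have z: "u = (0,0)" if zT: "\<sigma> \<notin> T" and zu: "\<gamma> u = Some \<sigma>" for u
    proof -
      obtain n where u: "u = walkpos w n" using dom\<gamma> zu by (metis domI imageE)
      then have "g n = Some \<sigma>" using \<gamma>w zu by simp
      then obtain n' where n': "\<alpha> (walkpos w n') = Some \<sigma>" "n' = n \<or> n' > ni" using gal by metis
      then have "walkpos w n' = walkpos w 0" using uniq\<alpha>[OF zT n'(1) seed\<alpha>] by simp
      then have "n' = 0" using inj by (meson injD)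
      then show ?thesis using n'(2) u by auto
    qed
    show "\<sigma> \<notin> T \<longrightarrow> (\<forall>u v. \<gamma> u = Some \<sigma> \<and> \<gamma> v = Some \<sigma> \<longrightarrow> u = v)"
      using z by auto
  qed
  have seed\<gamma>: "\<gamma> (0,0) = Some \<sigma>"
    using \<gamma>w[of 0] g_lo[of 0] seed\<alpha> by simp
  have prod\<gamma>: "producible T \<sigma> \<gamma>" using asm\<gamma> stab\<gamma> seed\<gamma> unfolding producible_def by simp
  have eq: "\<alpha> (walkpos w n) = g n" for n
    using assms(2) assms(3) prod\<gamma> dom\<alpha> dom\<gamma> \<gamma>w unfolding confluent_def by (metis IntI rangeI)
  have tper1: "\<alpha> (walkpos w (x + L)) = \<alpha> (walkpos w x)" if "x \<ge> ni" for x
    using eq[of "x + L"] g_hi[of "x + L"] that njL by simp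
  have tperk: "\<alpha> (walkpos w (x + k*L)) = \<alpha> (walkpos w x)" if "x \<ge> ni" for x k
  proof (induction k)
    case (Suc k)
    have "x + Suc k * L = (x + k*L) + L" by simp
    then show ?case using tper1[of "x + k*L"] that Suc by (metis trans_le_add1)
  qed simp
  define D where "D = walkpos w (ni + L) - walkpos w ni"
  have posL: "walkpos w (x + L) = walkpos w x + D" if "x \<ge> ni" for x
    using that
  proof (induction x rule: dec_induct)
    case base then show ?case by (simp add: D_def)
  next
    case (step x)
    have "w (x + 1*L) = w x" using wL[of x 1] step by simp
    then show ?case using step by (simp add: padd_eq algebra_simps)
  qed
  have poskL: "walkpos w (x + k*L) = walkpos w x + pscale (int k) D" if "x \<ge> ni" for x k
  proof (induction k)
    case 0 then show ?case by (simp add: pscale_0)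
  next
    case (Suc k)
    have "x + Suc k * L = (x + k*L) + L" by simp
    then show ?case using posL[of "x + k*L"] that Suc by (simp add: pscale_Suc pscale_Suc' algebra_simps)
  qed
  define m' where "m' = map w [0..<ni]"
  define p' where "p' = map (\<lambda>t. w (ni + t)) [0..<L]"
  have wm': "wvec m' = walkpos w ni"
    using walkpos_shift[of w 0 ni] by (simp add: m'_def zero_prod_def)
  have wp': "wvec p' = D"
    using walkpos_shift[of w ni L] by (simp add: p'_def D_def)
  have ult: "ultper m' p' = w"
  proof
    fix n
    show "ultper m' p' n = w n"
    proof (cases "n < ni")
      case True then show ?thesis by (simp add: ultper_def m'_def)
    next
      case False
      have "(n - ni) mod L < L" using Lpos by simp
      then have "ultper m' p' n = w (ni + (n - ni) mod L)"
        using False by (simp add: ultper_def m'_def p'_def)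
      also have "\<dots> = w (ni + (n - ni) mod L + ((n - ni) div L) * L)"
        using wL[of "ni + (n - ni) mod L" "(n - ni) div L"] by simp
      also have "ni + (n - ni) mod L + ((n - ni) div L) * L = n"
        using False by (simp add: mod_div_mult_eq)
      finally show ?thesis .
    qed
  qed
  have main: "\<alpha> (padd (padd (wvec m') (pscale (int i) (wvec p'))) (wvec q)) = \<alpha> (padd (wvec m') (wvec q))"
    if "prefix q p'" for i q
  proof -
    have lq: "length q \<le> L" using prefix_length_le[OF that] p'_def by simp
    have "q = take (length q) p'" using that by (metis append_eq_conv_conj prefixE)
    then have qd: "q = map (\<lambda>t. w (ni + t)) [0..<length q]" using lq by (simp add: p'_def take_map)
    have wq: "walkpos w ni + wvec q = walkpos w (ni + length q)"
      using walkpos_shift[of w ni "length q"] qd by simp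
    have "padd (padd (wvec m') (pscale (int i) (wvec p'))) (wvec q)
        = walkpos w (ni + length q) + pscale (int i) D"
      using wq by (simp add: padd_eq wm' wp' algebra_simps)
    also have "\<dots> = walkpos w (ni + length q + i * L)" using poskL[of "ni + length q" i] by simp
    finally have l: "padd (padd (wvec m') (pscale (int i) (wvec p'))) (wvec q) = walkpos w (ni + length q + i * L)" .
    have r: "padd (wvec m') (wvec q) = walkpos w (ni + length q)" using wq by (simp add: padd_eq wm')
    show ?thesis unfolding l r using tperk[of "ni + length q" i] by simp
  qed
  have "p' \<noteq> []" using Lpos by (simp add: p'_def)
  then show ?thesis using ult path main by blast
qed

end
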